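(* For each $a\in I$ let $P_a$ be a bottom set of $(X_a,\prec_a)$, and let $\mathbb{A}=(P,A,\prec)$, with $P=\dot\bigcup_a P_a$, be an alignment of the family $\{(P_a,\prec_a|_{P_a})\}_{a\in I}$ having at least one column. Let $\Xi$ be any column of $\mathbb{A}$ that is maximal with respect to $\prec$ (such a column exists). Then: (1) for each $a\in I$, either $\Xi\cap P_a=\emptyset$ (a gap in row $a$), in which case set $P'_a=P_a$, or $\Xi\cap P_a=\{p_a\}$ with $p_a\in\sup P_a$, in which case set $P'_a=P_a\setminus\{p_a\}$; and $\Xi$ is not entirely gaps, i.e., $\Xi\cap P_a\neq\emptyset$ for some $a$; (2) each $P'_a$ is a bottom set of $(X_a,\prec_a)$, and the restriction $\mathbb{A}'$ of $\mathbb{A}$ to $P\setminus\Xi=\dot\bigcup_a P'_a$ (induced subgraph, with columns the remaining columns of $\mathbb{A}$ and the restricted order) is an alignment of $\{(P'_a,\prec_a|_{P'_a})\}_{a\in I}$, so that $\mathbb{A}$ is obtained from $\mathbb{A}'$ by appending the column $\Xi$; (3) every column $\Upsilon$ of $\mathbb{A}'$ satisfies either $\Upsilon\prec\Xi$ or $\Upsilon$ and $\Xi$ are incomparable.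
   Context: Let $I$ be a finite index set ("rows"), and for each $a\in I$ let $(X_a,\prec_a)$ be a finite set with a strict partial order. A subset $P\subseteq X_a$ is a bottom set if for all $p\in P$ and all $p'\prec_a p$ we have $p'\in P$. For a bottom set $P$, $\sup P$ denotes the set of its maximal elements, i.e., $p\in P$ such that there is no $p'\in P$ with $p\prec_a p'$. Given a family of finite strict posets $(Y_a,\prec_a)$, $a\in I$, with elements written $(a,i)$ and $Y=\dot\bigcup_a Y_a$, and a simple undirected graph $(Y,A)$ with set of connected components ("columns") $\mathcal{C}(Y,A)$, an alignment of the family is a triple $(Y,A,\prec)$ where $\prec$ is a strict partial order on $\mathcal{C}(Y,A)$ such that: (P1) every column induces a complete subgraph; (P2) if $(a,i)\in Q$ and $(a,j)\in Q$ then $i=j$; (P3) if $(a,i)\in P$, $(a,j)\in Q$ and $(a,i)\prec_a(a,j)$ then $P\prec Q$; (P4) if $P\prec Q$, $(a,i)\in P$ and $(a,j)\in Q$, then $(a,i)\prec_a(a,j)$ or $(a,i)$ and $(a,j)$ are incomparable w.r.t. $\prec_a$. *)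

theory Defs
  imports Main
begin

definition strict_po_on :: "'a set \<Rightarrow> ('a \<Rightarrow> 'a \<Rightarrow> bool) \<Rightarrow> bool" where
  "strict_po_on S r \<longleftrightarrow>
     (\<forall>x\<in>S. \<not> r x x) \<and> (\<forall>x\<in>S. \<forall>y\<in>S. \<forall>z\<in>S. r x y \<longrightarrow> r y z \<longrightarrow> r x z)"

definition bottom_set :: "'a set \<Rightarrow> ('a \<Rightarrow> 'a \<Rightarrow> bool) \<Rightarrow> 'a set \<Rightarrow> bool" where
  "bottom_set X r P \<longleftrightarrow> P \<subseteq> X \<and> (\<forall>p\<in>P. \<forall>p'\<in>X. r p' p \<longrightarrow> p' \<in> P)"

definition sup_set :: "('a \<Rightarrow> 'a \<Rightarrow> bool) \<Rightarrow> 'a set \<Rightarrow> 'a set" where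
  "sup_set r P = {p \<in> P. \<not> (\<exists>p'\<in>P. r p p')}"

definition simple_graph :: "'v set \<Rightarrow> ('v \<Rightarrow> 'v \<Rightarrow> bool) \<Rightarrow> bool" where
  "simple_graph V E \<longleftrightarrow> (\<forall>u v. E u v \<longrightarrow> u \<in> V \<and> v \<in> V \<and> E v u \<and> u \<noteq> v)"

text \<open>Connected components (columns) of the graph (V, E).\<close>
definition components :: "'v set \<Rightarrow> ('v \<Rightarrow> 'v \<Rightarrow> bool) \<Rightarrow> 'v set set" where
  "components V E =
     (\<lambda>u. {v \<in> V. (\<lambda>x y. E x y \<and> x \<in> V \<and> y \<in> V)\<^sup>*\<^sup>* u v}) ` V"

text \<open>Alignment (Y, A, prec) of the family of strict posets (Y a, lt a), a \<in> I.
  The disjoint union of the Y a is Sigma I Y, elements written (a, i).\<close>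
definition alignment ::
  "'i set \<Rightarrow> ('i \<Rightarrow> 'x set) \<Rightarrow> ('i \<Rightarrow> 'x \<Rightarrow> 'x \<Rightarrow> bool)
   \<Rightarrow> (('i \<times> 'x) \<Rightarrow> ('i \<times> 'x) \<Rightarrow> bool)
   \<Rightarrow> (('i \<times> 'x) set \<Rightarrow> ('i \<times> 'x) set \<Rightarrow> bool) \<Rightarrow> bool" where
  "alignment I Y lt E prec \<longleftrightarrow>
     (let U = Sigma I Y; C = components U E in
      simple_graph U E \<and>
      strict_po_on C prec \<and>
      \<comment> \<open>(P1)\<close>
      (\<forall>Q\<in>C. \<forall>u\<in>Q. \<forall>v\<in>Q. u \<noteq> v \<longrightarrow> E u v) \<and>
      \<comment> \<open>(P2)\<close>
      (\<forall>Q\<in>C. \<forall>a i j. (a, i) \<in> Q \<longrightarrow> (a, j) \<in> Q \<longrightarrow> i = j) \<and>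
      \<comment> \<open>(P3)\<close>
      (\<forall>P\<in>C. \<forall>Q\<in>C. \<forall>a i j. (a, i) \<in> P \<longrightarrow> (a, j) \<in> Q \<longrightarrow> lt a i j \<longrightarrow> prec P Q) \<and>
      \<comment> \<open>(P4)\<close>
      (\<forall>P\<in>C. \<forall>Q\<in>C. \<forall>a i j. prec P Q \<longrightarrow> (a, i) \<in> P \<longrightarrow> (a, j) \<in> Q \<longrightarrow>
          lt a i j \<or> (\<not> lt a i j \<and> \<not> lt a j i)))"

end

theory Submission
  imports Defs
begin

lemma sg_R: "simple_graph V E \<Longrightarrow> (\<lambda>x y. E x y \<and> x \<in> V \<and> y \<in> V) = E"
  by (auto simp: simple_graph_def fun_eq_iff)

lemma comps_simple: "simple_graph V E \<Longrightarrow> components V E = (\<lambda>u. {v\<in>V. E\<^sup>*\<^sup>* u v}) ` V"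
  unfolding components_def by (simp add: sg_R)

lemma rtc_sym: assumes "simple_graph V E" "E\<^sup>*\<^sup>* u v" shows "E\<^sup>*\<^sup>* v u"
  using assms(2)
proof (induction rule: rtranclp_induct)
  case base then show ?case by simp
next
  case (step y z)
  then have "E z y" using assms(1) by (auto simp: simple_graph_def)
  then show ?case using step by (meson converse_rtranclp_into_rtranclp)
qed

lemma rtc_V: assumes "simple_graph V E" "E\<^sup>*\<^sup>* u v" "u \<in> V" shows "v \<in> V"
  using assms(2,3)
proof (induction rule: rtranclp_induct)
  case base then show ?case by simp
next
  case (step y z)
  then show ?case using assms(1) by (auto simp: simple_graph_def)
qed

lemma comp_of_mem:
  assumes "simple_graph V E" "Q \<in> components V E" "u \<in> Q"
  shows "Q = {v\<in>V. E\<^sup>*\<^sup>* u v}"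
proof -
  obtain w where w: "w \<in> V" "Q = {v\<in>V. E\<^sup>*\<^sup>* w v}" using assms(1,2) comps_simple by blast
  then have u: "u \<in> V" "E\<^sup>*\<^sup>* w u" using assms(3) by auto
  have "E\<^sup>*\<^sup>* u w" using rtc_sym[OF assms(1) u(2)] .
  show ?thesis using w u \<open>E\<^sup>*\<^sup>* u w\<close> by (auto intro: rtranclp_trans)
qed

lemma comp_sub: "simple_graph V E \<Longrightarrow> Q \<in> components V E \<Longrightarrow> Q \<subseteq> V"
  using comps_simple by fastforce

lemma comp_ne: "simple_graph V E \<Longrightarrow> Q \<in> components V E \<Longrightarrow> \<exists>u. u \<in> Q"
  using comps_simple by fastforce

lemma comp_in: "simple_graph V E \<Longrightarrow> u \<in> V \<Longrightarrow> {v\<in>V. E\<^sup>*\<^sup>* u v} \<in> components V E"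
  using comps_simple by fastforce

lemma max_exists:
  assumes "finite C" "C \<noteq> {}" "strict_po_on C r"
  shows "\<exists>x\<in>C. \<not> (\<exists>y\<in>C. r x y)"
  using assms
proof (induction C rule: finite_ne_induct)
  case (singleton x) then have "\<not> r x x" unfolding strict_po_on_def by blast
  then show ?case by blast
next
  case (insert x F)
  have po: "strict_po_on F r" using insert.prems unfolding strict_po_on_def by (meson insertCI)
  obtain m where m: "m \<in> F" "\<not> (\<exists>y\<in>F. r m y)" using insert.IH[OF po] by blast
  have irr: "\<not> r x x" and tr: "\<And>y. y \<in> F \<Longrightarrow> r m x \<Longrightarrow> r x y \<Longrightarrow> r m y"
    using insert.prems m(1) unfolding strict_po_on_def by (meson insertCI)+
  show ?case
  proof (cases "r m x")
    case True
    have "\<not> (\<exists>y\<in>insert x F. r x y)"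
    proof
      assume "\<exists>y\<in>insert x F. r x y"
      then obtain y where y: "y \<in> insert x F" "r x y" by blast
      show False
      proof (cases "y = x")
        case True then show False using irr y by simp
      next
        case False then have "y \<in> F" using y by simp
        then show False using tr[OF _ \<open>r m x\<close> y(2)] m(2) by blast
      qed
    qed
    then show ?thesis by blast
  next
    case False then show ?thesis using m by blast
  qed
qed


theorem theorem1:
  fixes I :: "'i set" and X P :: "'i \<Rightarrow> 'x set" and lt :: "'i \<Rightarrow> 'x \<Rightarrow> 'x \<Rightarrow> bool"
    and E :: "('i \<times> 'x) \<Rightarrow> ('i \<times> 'x) \<Rightarrow> bool"
    and prec :: "('i \<times> 'x) set \<Rightarrow> ('i \<times> 'x) set \<Rightarrow> bool"
  assumes "finite I"
    and "\<forall>a\<in>I. finite (X a) \<and> strict_po_on (X a) (lt a)"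
    and "\<forall>a\<in>I. bottom_set (X a) (lt a) (P a)"
    and "alignment I P lt E prec"
    and "components (Sigma I P) E \<noteq> {}"
  shows "(\<exists>\<Xi>\<in>components (Sigma I P) E. \<not> (\<exists>Q\<in>components (Sigma I P) E. prec \<Xi> Q))
    \<and> (\<forall>\<Xi>\<in>components (Sigma I P) E. \<not> (\<exists>Q\<in>components (Sigma I P) E. prec \<Xi> Q) \<longrightarrow>
        (let P' = (\<lambda>a. P a - {x. (a, x) \<in> \<Xi>});
             E' = (\<lambda>u v. E u v \<and> u \<notin> \<Xi> \<and> v \<notin> \<Xi>);
             prec' = (\<lambda>C D. prec C D \<and> C \<noteq> \<Xi> \<and> D \<noteq> \<Xi>)
         in
         \<comment> \<open>(1)\<close>
         (\<forall>a\<in>I. {x. (a, x) \<in> \<Xi>} = {} \<or>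
                 (\<exists>p. {x. (a, x) \<in> \<Xi>} = {p} \<and> p \<in> sup_set (lt a) (P a))) \<and>
         (\<exists>a\<in>I. {x. (a, x) \<in> \<Xi>} \<noteq> {}) \<and>
         \<comment> \<open>(2)\<close>
         (\<forall>a\<in>I. bottom_set (X a) (lt a) (P' a)) \<and>
         Sigma I P - \<Xi> = Sigma I P' \<and>
         components (Sigma I P') E' = components (Sigma I P) E - {\<Xi>} \<and>
         alignment I P' lt E' prec' \<and>
         \<comment> \<open>(3)\<close>
         (\<forall>\<Upsilon>\<in>components (Sigma I P') E'.
             prec \<Upsilon> \<Xi> \<or> (\<not> prec \<Upsilon> \<Xi> \<and> \<not> prec \<Xi> \<Upsilon>))))"
proof -
  let ?U = "Sigma I P"
  let ?C = "components ?U E"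
  have sg: "simple_graph ?U E" and po: "strict_po_on ?C prec"
    and P1: "\<forall>Q\<in>?C. \<forall>u\<in>Q. \<forall>v\<in>Q. u \<noteq> v \<longrightarrow> E u v"
    and P2: "\<forall>Q\<in>?C. \<forall>a i j. (a, i) \<in> Q \<longrightarrow> (a, j) \<in> Q \<longrightarrow> i = j"
    and P3: "\<forall>P\<in>?C. \<forall>Q\<in>?C. \<forall>a i j. (a, i) \<in> P \<longrightarrow> (a, j) \<in> Q \<longrightarrow> lt a i j \<longrightarrow> prec P Q"
    and P4: "\<forall>P\<in>?C. \<forall>Q\<in>?C. \<forall>a i j. prec P Q \<longrightarrow> (a, i) \<in> P \<longrightarrow> (a, j) \<in> Q \<longrightarrow>
          lt a i j \<or> (\<not> lt a i j \<and> \<not> lt a j i)"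
    using assms(4) unfolding alignment_def Let_def by auto
  have finU: "finite ?U"
    using assms(1,2,3) by (auto simp: bottom_set_def intro!: finite_SigmaI intro: finite_subset)
  have finC: "finite ?C" using finU comps_simple[OF sg] by simp
  have A: "\<exists>\<Xi>\<in>?C. \<not> (\<exists>Q\<in>?C. prec \<Xi> Q)"
    using max_exists[OF finC assms(5) po] .
  have B: "(let P' = (\<lambda>a. P a - {x. (a, x) \<in> \<Xi>});
             E' = (\<lambda>u v. E u v \<and> u \<notin> \<Xi> \<and> v \<notin> \<Xi>);
             prec' = (\<lambda>C D. prec C D \<and> C \<noteq> \<Xi> \<and> D \<noteq> \<Xi>)
         in
         (\<forall>a\<in>I. {x. (a, x) \<in> \<Xi>} = {} \<or>
                 (\<exists>p. {x. (a, x) \<in> \<Xi>} = {p} \<and> p \<in> sup_set (lt a) (P a))) \<and>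
         (\<exists>a\<in>I. {x. (a, x) \<in> \<Xi>} \<noteq> {}) \<and>
         (\<forall>a\<in>I. bottom_set (X a) (lt a) (P' a)) \<and>
         Sigma I P - \<Xi> = Sigma I P' \<and>
         components (Sigma I P') E' = components (Sigma I P) E - {\<Xi>} \<and>
         alignment I P' lt E' prec' \<and>
         (\<forall>\<Upsilon>\<in>components (Sigma I P') E'.
             prec \<Upsilon> \<Xi> \<or> (\<not> prec \<Upsilon> \<Xi> \<and> \<not> prec \<Xi> \<Upsilon>)))"
    if Xi: "\<Xi> \<in> ?C" and mx: "\<not> (\<exists>Q\<in>?C. prec \<Xi> Q)" for \<Xi>
  proof -
    define P' where "P' = (\<lambda>a. P a - {x. (a, x) \<in> \<Xi>})"
    define E' where "E' = (\<lambda>u v. E u v \<and> u \<notin> \<Xi> \<and> v \<notin> \<Xi>)"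
    define prec' where "prec' = (\<lambda>C D. prec C D \<and> C \<noteq> \<Xi> \<and> D \<noteq> \<Xi>)"
    have XiU: "\<Xi> \<subseteq> ?U" using comp_sub[OF sg Xi] .
    have compU: "{v\<in>?U. E\<^sup>*\<^sup>* u v} \<in> ?C" "u \<in> {v\<in>?U. E\<^sup>*\<^sup>* u v}" if "u \<in> ?U" for u
      using comp_in[OF sg that] that by auto
    have up: "prec \<Xi> Q \<Longrightarrow> Q \<in> ?C \<Longrightarrow> False" for Q using mx by blast
    have row: "\<forall>a\<in>I. {x. (a, x) \<in> \<Xi>} = {} \<or>
                 (\<exists>p. {x. (a, x) \<in> \<Xi>} = {p} \<and> p \<in> sup_set (lt a) (P a))"
    proof
      fix a assume a: "a \<in> I"
      show "{x. (a, x) \<in> \<Xi>} = {} \<or> (\<exists>p. {x. (a, x) \<in> \<Xi>} = {p} \<and> p \<in> sup_set (lt a) (P a))"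
      proof (cases "{x. (a, x) \<in> \<Xi>} = {}")
        case False
        then obtain p where p: "(a, p) \<in> \<Xi>" by auto
        have one: "{x. (a, x) \<in> \<Xi>} = {p}" using p P2 Xi by blast
        have pP: "p \<in> P a" using p XiU by auto
        have "\<not> (\<exists>p'\<in>P a. lt a p p')"
        proof
          assume "\<exists>p'\<in>P a. lt a p p'"
          then obtain p' where p': "p' \<in> P a" "lt a p p'" by blast
          have "(a, p') \<in> ?U" using a p' by auto
          note cu = compU[OF this]
          have "prec \<Xi> {v\<in>?U. E\<^sup>*\<^sup>* (a,p') v}"
            by (rule P3[rule_format, OF Xi cu(1) p cu(2) p'(2)])
          then show False using up cu(1) by blast
        qed
        then show ?thesis using one pP by (auto simp: sup_set_def)
      qed simp
    qed
    have nonempty: "\<exists>a\<in>I. {x. (a, x) \<in> \<Xi>} \<noteq> {}"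
    proof -
      obtain w where "w \<in> \<Xi>" using comp_ne[OF sg Xi] by blast
      then show ?thesis using XiU by (cases w) auto
    qed
    have bot: "\<forall>a\<in>I. bottom_set (X a) (lt a) (P' a)"
    proof
      fix a assume a: "a \<in> I"
      have b: "bottom_set (X a) (lt a) (P a)" using assms(3) a by blast
      show "bottom_set (X a) (lt a) (P' a)"
        unfolding bottom_set_def
      proof (intro conjI ballI impI)
        show "P' a \<subseteq> X a" using b unfolding P'_def bottom_set_def by blast
      next
        fix p p' assume p: "p \<in> P' a" and p': "p' \<in> X a" and l: "lt a p' p"
        have "p' \<in> P a" using b p p' l unfolding P'_def bottom_set_def by blast
        moreover have "(a, p') \<notin> \<Xi>"
        proof
          assume in\<Xi>: "(a, p') \<in> \<Xi>"
          have "(a, p) \<in> ?U" using a p unfolding P'_def by auto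
          note cu = compU[OF this]
          have "prec \<Xi> {v\<in>?U. E\<^sup>*\<^sup>* (a,p) v}"
            by (rule P3[rule_format, OF Xi cu(1) in\<Xi> cu(2) l])
          then show False using up cu(1) by blast
        qed
        ultimately show "p' \<in> P' a" unfolding P'_def by auto
      qed
    qed
    have sig: "Sigma I P - \<Xi> = Sigma I P'" using XiU unfolding P'_def by auto
    have avoid: "v \<notin> \<Xi>" if "u \<in> ?U" "u \<notin> \<Xi>" "E\<^sup>*\<^sup>* u v" for u v
    proof
      assume "v \<in> \<Xi>"
      then have "\<Xi> = {w\<in>?U. E\<^sup>*\<^sup>* v w}" using comp_of_mem[OF sg Xi] by blast
      moreover have "E\<^sup>*\<^sup>* v u" using rtc_sym[OF sg that(3)] .
      ultimately show False using that by blast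
    qed
    have reach: "E'\<^sup>*\<^sup>* u v \<longleftrightarrow> E\<^sup>*\<^sup>* u v" if "u \<in> ?U" "u \<notin> \<Xi>" for u v
    proof
      assume "E'\<^sup>*\<^sup>* u v"
      then show "E\<^sup>*\<^sup>* u v" by (rule rtranclp_mono[THEN predicate2D, rotated]) (auto simp: E'_def)
    next
      assume "E\<^sup>*\<^sup>* u v"
      then show "E'\<^sup>*\<^sup>* u v"
      proof (induction rule: rtranclp_induct)
        case base then show ?case by simp
      next
        case (step y z)
        have "y \<notin> \<Xi>" "z \<notin> \<Xi>"
          using avoid[OF that step(1)] avoid[OF that rtranclp.rtrancl_into_rtrancl[OF step(1) step(2)]]
          by auto
        then have "E' y z" using step(2) by (simp add: E'_def)
        then show ?case using step(3) by (rule rtranclp.rtrancl_into_rtrancl[rotated])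
      qed
    qed
    have sg': "simple_graph (Sigma I P') E'"
      using sg sig[symmetric] unfolding simple_graph_def E'_def by auto
    have compsEq: "components (Sigma I P') E' = ?C - {\<Xi>}"
    proof -
      have "components (Sigma I P') E' = (\<lambda>u. {v\<in>Sigma I P'. E'\<^sup>*\<^sup>* u v}) ` (?U - \<Xi>)"
        using comps_simple[OF sg'] sig by simp
      also have "\<dots> = (\<lambda>u. {v\<in>?U. E\<^sup>*\<^sup>* u v}) ` (?U - \<Xi>)"
      proof (rule image_cong[OF refl])
        fix u assume u: "u \<in> ?U - \<Xi>"
        show "{v\<in>Sigma I P'. E'\<^sup>*\<^sup>* u v} = {v\<in>?U. E\<^sup>*\<^sup>* u v}"
          using reach[of u] avoid[of u] u sig[symmetric] by auto
      qed
      also have "\<dots> = ?C - {\<Xi>}"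
      proof
        show "(\<lambda>u. {v\<in>?U. E\<^sup>*\<^sup>* u v}) ` (?U - \<Xi>) \<subseteq> ?C - {\<Xi>}"
          using compU by blast
      next
        show "?C - {\<Xi>} \<subseteq> (\<lambda>u. {v\<in>?U. E\<^sup>*\<^sup>* u v}) ` (?U - \<Xi>)"
        proof
          fix Q assume Q: "Q \<in> ?C - {\<Xi>}"
          then obtain w where w: "w \<in> ?U" "Q = {v\<in>?U. E\<^sup>*\<^sup>* w v}"
            using comps_simple[OF sg] by blast
          have "w \<notin> \<Xi>"
          proof
            assume "w \<in> \<Xi>"
            then have "\<Xi> = {v\<in>?U. E\<^sup>*\<^sup>* w v}" using comp_of_mem[OF sg Xi] by blast
            then show False using Q w by simp
          qed
          then show "Q \<in> (\<lambda>u. {v\<in>?U. E\<^sup>*\<^sup>* u v}) ` (?U - \<Xi>)" using w by blast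
        qed
      qed
      finally show ?thesis .
    qed
    have disj: "Q \<inter> \<Xi> = {}" if "Q \<in> ?C" "Q \<noteq> \<Xi>" for Q
    proof (rule ccontr)
      assume "Q \<inter> \<Xi> \<noteq> {}"
      then obtain u where "u \<in> Q" "u \<in> \<Xi>" by blast
      then show False using comp_of_mem[OF sg that(1)] comp_of_mem[OF sg Xi] that(2) by metis
    qed
    have al: "alignment I P' lt E' prec'"
      unfolding alignment_def Let_def compsEq
    proof (intro conjI)
      show "simple_graph (Sigma I P') E'" by (rule sg')
      show "strict_po_on (?C - {\<Xi>}) prec'"
        using po unfolding strict_po_on_def prec'_def by blast
      show "\<forall>Q\<in>?C - {\<Xi>}. \<forall>u\<in>Q. \<forall>v\<in>Q. u \<noteq> v \<longrightarrow> E' u v"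
        using P1 disj unfolding E'_def by blast
      show "\<forall>Q\<in>?C - {\<Xi>}. \<forall>a i j. (a, i) \<in> Q \<longrightarrow> (a, j) \<in> Q \<longrightarrow> i = j"
        using P2 by blast
      show "\<forall>Pa\<in>?C - {\<Xi>}. \<forall>Q\<in>?C - {\<Xi>}. \<forall>a i j. (a, i) \<in> Pa \<longrightarrow> (a, j) \<in> Q \<longrightarrow> lt a i j \<longrightarrow> prec' Pa Q"
        using P3 unfolding prec'_def by blast
      show "\<forall>Pa\<in>?C - {\<Xi>}. \<forall>Q\<in>?C - {\<Xi>}. \<forall>a i j. prec' Pa Q \<longrightarrow> (a, i) \<in> Pa \<longrightarrow> (a, j) \<in> Q \<longrightarrow>
          lt a i j \<or> (\<not> lt a i j \<and> \<not> lt a j i)"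
        using P4 unfolding prec'_def by blast
    qed
    have three: "\<forall>\<Upsilon>\<in>components (Sigma I P') E'. prec \<Upsilon> \<Xi> \<or> (\<not> prec \<Upsilon> \<Xi> \<and> \<not> prec \<Xi> \<Upsilon>)"
      using compsEq mx by auto
    show ?thesis unfolding Let_def P'_def[symmetric] E'_def[symmetric] prec'_def[symmetric]
      using row nonempty bot sig compsEq al three by blast
  qed
  show ?thesis using A B by blast
qed

end
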